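(* Let $(A,\succ,\prec)$ be an anti-pre-Novikov algebra and $s\in A\otimes A$ define a factorizable anti-pre-Novikov bialgebra $(A,\succ,\prec,\Delta_{\succ,s},\Delta_{\prec,s})$. Consider the direct sum anti-pre-Novikov algebra $A\oplus A$ (componentwise operations) and the linear map $T_s\oplus T_{\tau(s)}:A^*\to A\oplus A$, $\zeta\mapsto(T_s(\zeta),-T_{\tau(s)}(\zeta))$. Then $\mathrm{Im}(T_s\oplus T_{\tau(s)})$ is an anti-pre-Novikov subalgebra of $A\oplus A$ isomorphic to the anti-pre-Novikov algebra $(A^*,\succ_s,\prec_s)$. Furthermore, every $x\in A$ has a unique decomposition $x=x_1-x_2$ with $(x_1,x_2)\in\mathrm{Im}(T_s\oplus T_{\tau(s)})$.
   Context: $A$ is finite-dimensional over a field $k$. An anti-pre-Novikov algebra is $(A,\succ,\prec)$ such that with $x\circ y=x\succ y+x\prec y$: $(x\circ y-y\circ x)\succ z=y\succ(x\succ z)-x\succ(y\succ z)$; $x\prec(y\circ z)=(y\succ x)\prec z-(x\prec y)\prec z-y\succ(x\prec z)$; $(x\circ y)\succ z=-(x\succ z)\prec y$; $(x\prec y)\prec z=(x\prec z)\prec y$; $(x\circ y-y\circ x)\prec z=x\succ(y\circ z)-y\succ(x\circ z)$. Notation: $x\odot y=x\succ y+y\prec x$; $L_\ast(x)y=x\ast y$, $R_\ast(x)y=y\ast x$; $L_{\star}=L_{\circ}+R_{\circ}$, $L_{\odot}=L_{\succ}+R_{\prec}$, $R_{\odot}=R_{\succ}+L_{\prec}$; for $f:A\to\mathrm{End}(A)$,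 $\langle f^*(x)\zeta,y\rangle=-\langle\zeta,f(x)y\rangle$; $\tau$ is the flip; $T_r:A^*\to A$, $\langle T_r(\zeta),\eta\rangle=\langle r,\zeta\otimes\eta\rangle$. $r$ is invariant if $(I\otimes L_{\star}(x)-L_{\succ}(x)\otimes I)r=0$ and $(L_{\circ}(x)\otimes I-I\otimes L_{\odot}(x))r=0$ for all $x$. For $s=\sum_i a_i\otimes b_i$ the APN-YBE is $\sum_{i,j}a_i\circ a_j\otimes b_i\otimes b_j+\sum_{i,j}a_j\otimes a_i\otimes(b_i\odot b_j)+\sum_{i,j}a_i\otimes(b_i\prec a_j)\otimes b_j=0$. With $\Delta_{\succ,s}(x)=(I\otimes L_{\star}(x)-L_{\succ}(x)\otimes I)s$, $\Delta_{\prec,s}(x)=(L_{\circ}(x)\otimes I-I\otimes L_{\odot}(x))s$, the datum $(A,\succ,\prec,\Delta_{\succ,s},\Delta_{\prec,s})$ is a factorizable anti-pre-Novikov bialgebra when $s$ solves the APN-YBE, $s+\tau(s)$ is invariant and $T_{s+\tau(s)}$ is a linear isomorphism. The operations on $A^*$ dual to $\Delta_{\succ,s},\Delta_{\prec,s}$ are $\zeta\succ_s\eta=R_{\succ}^*(T_{\tau(s)}(\eta))\zeta-L_{\star}^*(T_s(\zeta))\eta$ and $\zeta\prec_s\eta=R_{\odot}^*(T_s(\zeta))\eta-R_{\circ}^*(T_{\tau(s)}(\eta))\zeta$. *)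

theory Defs
  imports Main
begin

text \<open>The finite-dimensional space A over the field 'k is represented in
coordinates as 'n \<Rightarrow> 'k for a finite index type 'n (standard basis ebasis i).
The dual space A* is also represented as 'n \<Rightarrow> 'k, via the pairing
dpair zeta x = sum_i zeta i * x i (dual basis).  A tensor r in A \<otimes> A is represented by its
coefficient matrix r i j (r = sum_{i,j} r i j e_i \<otimes> e_j); triple tensors analogously.\<close>

definition vadd :: "('n \<Rightarrow> 'k::field) \<Rightarrow> ('n \<Rightarrow> 'k) \<Rightarrow> ('n \<Rightarrow> 'k)" where
  "vadd x y = (\<lambda>i. x i + y i)"
definition vsub :: "('n \<Rightarrow> 'k::field) \<Rightarrow> ('n \<Rightarrow> 'k) \<Rightarrow> ('n \<Rightarrow> 'k)" where
  "vsub x y = (\<lambda>i. x i - y i)"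
definition vneg :: "('n \<Rightarrow> 'k::field) \<Rightarrow> ('n \<Rightarrow> 'k)" where
  "vneg x = (\<lambda>i. - x i)"
definition vzero :: "'n \<Rightarrow> 'k::field" where
  "vzero = (\<lambda>i. 0)"
definition smul :: "'k::field \<Rightarrow> ('n \<Rightarrow> 'k) \<Rightarrow> ('n \<Rightarrow> 'k)" where
  "smul c x = (\<lambda>i. c * x i)"

definition lin_map :: "(('n \<Rightarrow> 'k::field) \<Rightarrow> ('m \<Rightarrow> 'k)) \<Rightarrow> bool" where
  "lin_map f \<longleftrightarrow> (\<forall>x y. f (vadd x y) = vadd (f x) (f y)) \<and> (\<forall>c x. f (smul c x) = smul c (f x))"

definition bilinear_op :: "(('n \<Rightarrow> 'k::field) \<Rightarrow> ('n \<Rightarrow> 'k) \<Rightarrow> ('n \<Rightarrow> 'k)) \<Rightarrow> bool" where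
  "bilinear_op m \<longleftrightarrow> (\<forall>y. lin_map (\<lambda>x. m x y)) \<and> (\<forall>x. lin_map (m x))"

definition circ :: "(('n \<Rightarrow> 'k::field) \<Rightarrow> ('n \<Rightarrow> 'k) \<Rightarrow> ('n \<Rightarrow> 'k)) \<Rightarrow> (('n \<Rightarrow> 'k) \<Rightarrow> ('n \<Rightarrow> 'k) \<Rightarrow> ('n \<Rightarrow> 'k))
   \<Rightarrow> ('n \<Rightarrow> 'k) \<Rightarrow> ('n \<Rightarrow> 'k) \<Rightarrow> ('n \<Rightarrow> 'k)" where
  "circ sc pr x y = vadd (sc x y) (pr x y)"
definition odot :: "(('n \<Rightarrow> 'k::field) \<Rightarrow> ('n \<Rightarrow> 'k) \<Rightarrow> ('n \<Rightarrow> 'k)) \<Rightarrow> (('n \<Rightarrow> 'k) \<Rightarrow> ('n \<Rightarrow> 'k) \<Rightarrow> ('n \<Rightarrow> 'k))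
   \<Rightarrow> ('n \<Rightarrow> 'k) \<Rightarrow> ('n \<Rightarrow> 'k) \<Rightarrow> ('n \<Rightarrow> 'k)" where
  "odot sc pr x y = vadd (sc x y) (pr y x)"

definition anti_pre_Novikov :: "(('n \<Rightarrow> 'k::field) \<Rightarrow> ('n \<Rightarrow> 'k) \<Rightarrow> ('n \<Rightarrow> 'k)) \<Rightarrow> (('n \<Rightarrow> 'k) \<Rightarrow> ('n \<Rightarrow> 'k) \<Rightarrow> ('n \<Rightarrow> 'k)) \<Rightarrow> bool" where
  "anti_pre_Novikov sc pr \<longleftrightarrow> bilinear_op sc \<and> bilinear_op pr \<and>
    (\<forall>x y z.
      sc (vsub (circ sc pr x y) (circ sc pr y x)) z = vsub (sc y (sc x z)) (sc x (sc y z)) \<and>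
      pr x (circ sc pr y z) = vsub (vsub (pr (sc y x) z) (pr (pr x y) z)) (sc y (pr x z)) \<and>
      sc (circ sc pr x y) z = vneg (pr (sc x z) y) \<and>
      pr (pr x y) z = pr (pr x z) y \<and>
      pr (vsub (circ sc pr x y) (circ sc pr y x)) z = vsub (sc x (circ sc pr y z)) (sc y (circ sc pr x z)))"

definition ebasis :: "'n \<Rightarrow> 'n \<Rightarrow> 'k::field" where
  "ebasis i = (\<lambda>j. if j = i then 1 else 0)"

definition dpair :: "('n::finite \<Rightarrow> 'k::field) \<Rightarrow> ('n \<Rightarrow> 'k) \<Rightarrow> 'k" where
  "dpair zeta x = (\<Sum>i\<in>UNIV. zeta i * x i)"

text \<open>T_r : A* \<rightarrow> A, characterised by dpair (Tmap r zeta) eta = <r, zeta \<otimes> eta>\<close>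
definition Tmap :: "('n::finite \<Rightarrow> 'n \<Rightarrow> 'k::field) \<Rightarrow> ('n \<Rightarrow> 'k) \<Rightarrow> ('n \<Rightarrow> 'k)" where
  "Tmap r zeta = (\<lambda>j. \<Sum>i\<in>UNIV. r i j * zeta i)"

definition flip :: "('n \<Rightarrow> 'n \<Rightarrow> 'k) \<Rightarrow> ('n \<Rightarrow> 'n \<Rightarrow> 'k)" where
  "flip r = (\<lambda>i j. r j i)"

definition tsum2 :: "('n \<Rightarrow> 'n \<Rightarrow> 'k::field) \<Rightarrow> ('n \<Rightarrow> 'n \<Rightarrow> 'k) \<Rightarrow> ('n \<Rightarrow> 'n \<Rightarrow> 'k)" where
  "tsum2 r t = (\<lambda>i j. r i j + t i j)"

definition tensor_map :: "(('n::finite \<Rightarrow> 'k::field) \<Rightarrow> ('n \<Rightarrow> 'k)) \<Rightarrow> (('n \<Rightarrow> 'k) \<Rightarrow> ('n \<Rightarrow> 'k))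
    \<Rightarrow> ('n \<Rightarrow> 'n \<Rightarrow> 'k) \<Rightarrow> ('n \<Rightarrow> 'n \<Rightarrow> 'k)" where
  "tensor_map f g r = (\<lambda>u v. \<Sum>p\<in>UNIV. \<Sum>q\<in>UNIV. r p q * f (ebasis p) u * g (ebasis q) v)"

definition tens3 :: "('n \<Rightarrow> 'k::field) \<Rightarrow> ('n \<Rightarrow> 'k) \<Rightarrow> ('n \<Rightarrow> 'k) \<Rightarrow> ('n \<Rightarrow> 'n \<Rightarrow> 'n \<Rightarrow> 'k)" where
  "tens3 a b c = (\<lambda>u v w. a u * b v * c w)"

definition Lstar where "Lstar sc pr x = (\<lambda>y. vadd (circ sc pr x y) (circ sc pr y x))"
definition Lodot where "Lodot sc pr x = (\<lambda>y. odot sc pr x y)"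
definition Rodot where "Rodot sc pr x = (\<lambda>y. odot sc pr y x)"
definition Rcirc where "Rcirc sc pr x = (\<lambda>y. circ sc pr y x)"
definition Rop where "Rop m x = (\<lambda>y. m y x)"

definition invariant :: "(('n::finite \<Rightarrow> 'k::field) \<Rightarrow> ('n \<Rightarrow> 'k) \<Rightarrow> ('n \<Rightarrow> 'k)) \<Rightarrow> (('n \<Rightarrow> 'k) \<Rightarrow> ('n \<Rightarrow> 'k) \<Rightarrow> ('n \<Rightarrow> 'k))
    \<Rightarrow> ('n \<Rightarrow> 'n \<Rightarrow> 'k) \<Rightarrow> bool" where
  "invariant sc pr r \<longleftrightarrow> (\<forall>x.
     tensor_map id (Lstar sc pr x) r = tensor_map (sc x) id r \<and>
     tensor_map (circ sc pr x) id r = tensor_map id (Lodot sc pr x) r)"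

text \<open>APN-YBE for s = sum_{p,q} s p q e_p \<otimes> e_q (so a_i = e_p, b_i = e_q with weight s p q).\<close>
definition APN_YBE :: "(('n::finite \<Rightarrow> 'k::field) \<Rightarrow> ('n \<Rightarrow> 'k) \<Rightarrow> ('n \<Rightarrow> 'k)) \<Rightarrow> (('n \<Rightarrow> 'k) \<Rightarrow> ('n \<Rightarrow> 'k) \<Rightarrow> ('n \<Rightarrow> 'k))
    \<Rightarrow> ('n \<Rightarrow> 'n \<Rightarrow> 'k) \<Rightarrow> bool" where
  "APN_YBE sc pr s \<longleftrightarrow> (\<forall>u v w.
     (\<Sum>p\<in>UNIV. \<Sum>q\<in>UNIV. \<Sum>p'\<in>UNIV. \<Sum>q'\<in>UNIV. s p q * s p' q' *
        (tens3 (circ sc pr (ebasis p) (ebasis p')) (ebasis q) (ebasis q') u v w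
       + tens3 (ebasis p') (ebasis p) (odot sc pr (ebasis q) (ebasis q')) u v w
       + tens3 (ebasis p) (pr (ebasis q) (ebasis p')) (ebasis q') u v w)) = 0)"

definition factorizable :: "(('n::finite \<Rightarrow> 'k::field) \<Rightarrow> ('n \<Rightarrow> 'k) \<Rightarrow> ('n \<Rightarrow> 'k)) \<Rightarrow> (('n \<Rightarrow> 'k) \<Rightarrow> ('n \<Rightarrow> 'k) \<Rightarrow> ('n \<Rightarrow> 'k))
    \<Rightarrow> ('n \<Rightarrow> 'n \<Rightarrow> 'k) \<Rightarrow> bool" where
  "factorizable sc pr s \<longleftrightarrow> APN_YBE sc pr s \<and> invariant sc pr (tsum2 s (flip s))
     \<and> bij (Tmap (tsum2 s (flip s)))"

text \<open>f^*(x) zeta, defined by <f^*(x) zeta, y> = - <zeta, f(x) y>\<close>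
definition dual_rep :: "(('n::finite \<Rightarrow> 'k::field) \<Rightarrow> ('n \<Rightarrow> 'k) \<Rightarrow> ('n \<Rightarrow> 'k)) \<Rightarrow> ('n \<Rightarrow> 'k) \<Rightarrow> ('n \<Rightarrow> 'k) \<Rightarrow> ('n \<Rightarrow> 'k)" where
  "dual_rep f x zeta = (\<lambda>j. - dpair zeta (f x (ebasis j)))"

definition dual_succ where
  "dual_succ sc pr s zeta eta =
     vsub (dual_rep (Rop sc) (Tmap (flip s) eta) zeta) (dual_rep (Lstar sc pr) (Tmap s zeta) eta)"
definition dual_prec where
  "dual_prec sc pr s zeta eta =
     vsub (dual_rep (Rodot sc pr) (Tmap s zeta) eta) (dual_rep (Rcirc sc pr) (Tmap (flip s) eta) zeta)"

definition dsum_op :: "(('n \<Rightarrow> 'k) \<Rightarrow> ('n \<Rightarrow> 'k) \<Rightarrow> ('n \<Rightarrow> 'k)) \<Rightarrow> ('n \<Rightarrow> 'k) \<times> ('n \<Rightarrow> 'k) \<Rightarrow> ('n \<Rightarrow> 'k) \<times> ('n \<Rightarrow> 'k) \<Rightarrow> ('n \<Rightarrow> 'k) \<times> ('n \<Rightarrow> 'k)" where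
  "dsum_op m a b = (m (fst a) (fst b), m (snd a) (snd b))"
definition padd :: "('n \<Rightarrow> 'k::field) \<times> ('n \<Rightarrow> 'k) \<Rightarrow> ('n \<Rightarrow> 'k) \<times> ('n \<Rightarrow> 'k) \<Rightarrow> ('n \<Rightarrow> 'k) \<times> ('n \<Rightarrow> 'k)" where
  "padd a b = (vadd (fst a) (fst b), vadd (snd a) (snd b))"
definition psmul :: "'k::field \<Rightarrow> ('n \<Rightarrow> 'k) \<times> ('n \<Rightarrow> 'k) \<Rightarrow> ('n \<Rightarrow> 'k) \<times> ('n \<Rightarrow> 'k)" where
  "psmul c a = (smul c (fst a), smul c (snd a))"

definition APN_subalgebra_dsum where
  "APN_subalgebra_dsum sc pr S \<longleftrightarrow> (vzero, vzero) \<in> S \<and>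
     (\<forall>a\<in>S. \<forall>b\<in>S. padd a b \<in> S) \<and> (\<forall>c. \<forall>a\<in>S. psmul c a \<in> S) \<and>
     (\<forall>a\<in>S. \<forall>b\<in>S. dsum_op sc a b \<in> S \<and> dsum_op pr a b \<in> S)"

definition APN_iso_dual_onto where
  "APN_iso_dual_onto sc pr s S \<longleftrightarrow> (\<exists>phi.
     (\<forall>x y. phi (vadd x y) = padd (phi x) (phi y)) \<and> (\<forall>c x. phi (smul c x) = psmul c (phi x)) \<and>
     bij_betw phi UNIV S \<and>
     (\<forall>zeta eta. phi (dual_succ sc pr s zeta eta) = dsum_op sc (phi zeta) (phi eta) \<and>
                phi (dual_prec sc pr s zeta eta) = dsum_op pr (phi zeta) (phi eta)))"

end

theory Submission
  imports Defs "HOL-Library.Function_Algebras"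
begin

lemma vops: "vadd x y = x + y" "vsub x y = x - y" "vneg x = - x" "vzero = 0"
  by (auto simp: vadd_def vsub_def vneg_def vzero_def fun_eq_iff)

lemma lin_add: "lin_map f \<Longrightarrow> f (x + y) = f x + f y"
  unfolding lin_map_def vops[symmetric] by blast
lemma lin_smul: "lin_map f \<Longrightarrow> f (\<lambda>i. c * x i) = (\<lambda>i. c * f x i)"
  unfolding lin_map_def smul_def by blast
lemma lin_zero: "lin_map f \<Longrightarrow> f 0 = 0"
proof -
  assume a: "lin_map f"
  have "f (\<lambda>i. 0 * (0::'a\<Rightarrow>'b) i) = (\<lambda>i. 0 * f 0 i)" by (rule lin_smul[OF a])
  thus ?thesis by (simp add: zero_fun_def)
qed
lemma lin_neg: "lin_map f \<Longrightarrow> f (- x) = - f x"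
proof -
  assume a: "lin_map f"
  have e: "(- x) = (\<lambda>i. (-1) * x i)" by (rule ext) simp
  have e2: "(\<lambda>i. (-1) * f x i) = - f x" by (rule ext) simp
  show ?thesis by (simp only: e lin_smul[OF a] e2)
qed
lemma lin_diff: "lin_map f \<Longrightarrow> f (x - y) = f x - f y"
  using lin_add[of f x "- y"] lin_neg[of f y] by simp

lemma lin_expand_aux:
  assumes a: "lin_map f" and "finite S"
  shows "f (\<lambda>j. \<Sum>i\<in>S. x i * ebasis i j) = (\<lambda>j. \<Sum>i\<in>S. x i * f (ebasis i) j)"
  using assms(2)
proof (induction S rule: finite_induct)
  case empty
  then show ?case using lin_zero[OF a] by (simp add: zero_fun_def)
next
  case (insert a' S)
  have "(\<lambda>j. \<Sum>i\<in>insert a' S. x i * ebasis i j) = (\<lambda>j. x a' * ebasis a' j) + (\<lambda>j. \<Sum>i\<in>S. x i * ebasis i j)"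
    using insert(1,2) by (simp add: plus_fun_def)
  then have "f (\<lambda>j. \<Sum>i\<in>insert a' S. x i * ebasis i j) = f (\<lambda>j. x a' * ebasis a' j) + f (\<lambda>j. \<Sum>i\<in>S. x i * ebasis i j)"
    using lin_add[OF a] by simp
  also have "\<dots> = (\<lambda>j. x a' * f (ebasis a') j) + (\<lambda>j. \<Sum>i\<in>S. x i * f (ebasis i) j)"
    using insert.IH lin_smul[OF a, of "x a'" "ebasis a'"] by simp
  finally show ?case using insert(1,2) by (simp add: plus_fun_def)
qed

lemma ebasis_expand: "(\<lambda>j. \<Sum>i\<in>UNIV. x i * ebasis i j) = (x :: 'n::finite \<Rightarrow> 'k::field)"
proof (rule ext)
  fix j
  have "(\<Sum>i\<in>UNIV. x i * ebasis i j) = (\<Sum>i\<in>UNIV. if j = i then x i else 0)"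
    by (rule sum.cong) (auto simp: ebasis_def)
  then show "(\<Sum>i\<in>UNIV. x i * ebasis i j) = x j" by simp
qed

lemma lin_expand:
  assumes "lin_map (f :: ('n::finite \<Rightarrow> 'k::field) \<Rightarrow> 'm \<Rightarrow> 'k)"
  shows "f x j = (\<Sum>i\<in>UNIV. x i * f (ebasis i) j)"
proof -
  have "f (\<lambda>j. \<Sum>i\<in>UNIV. x i * ebasis i j) = (\<lambda>j. \<Sum>i\<in>UNIV. x i * f (ebasis i) j)"
    by (rule lin_expand_aux[OF assms]) simp
  then show ?thesis unfolding ebasis_expand by simp
qed

lemma dpair_add2: "dpair z (x + y) = dpair z x + dpair z y"
  by (simp add: dpair_def algebra_simps sum.distrib)
lemma dpair_diff2: "dpair z (x - y) = dpair z x - dpair z y"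
  by (simp add: dpair_def algebra_simps sum_subtractf)
lemma dpair_neg2: "dpair z (- x) = - dpair z x"
  by (simp add: dpair_def sum_negf)
lemma dpair_add1: "dpair (z + w) x = dpair z x + dpair w x"
  by (simp add: dpair_def algebra_simps sum.distrib)
lemma dpair_diff1: "dpair (z - w) x = dpair z x - dpair w x"
  by (simp add: dpair_def algebra_simps sum_subtractf)
lemma dpair_neg1: "dpair (- z) x = - dpair z x"
  by (simp add: dpair_def sum_negf)
lemma if01: "(if P then 1 else 0) * (a::'k::field) = (if P then a else 0)" "a * (if P then 1 else 0) = (if P then a else 0)"
  by simp_all
lemma dpair_ebasis: "dpair (ebasis i) x = x i" "dpair z (ebasis i) = z i"
  by (simp_all add: dpair_def ebasis_def if01)

lemma vec_ext: "(\<And>t. dpair t x = dpair t y) \<Longrightarrow> x = (y :: 'n::finite \<Rightarrow> 'k::field)"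
  by (rule ext) (metis dpair_ebasis(1))

lemma dpair_lin: fixes f :: "('n::finite \<Rightarrow> 'k::field) \<Rightarrow> ('n \<Rightarrow> 'k)" shows "lin_map f \<Longrightarrow> dpair z (f x) = (\<Sum>i\<in>UNIV. x i * dpair z (f (ebasis i)))"
proof -
  assume a: "lin_map f"
  have "dpair z (f x) = (\<Sum>j\<in>UNIV. z j * (\<Sum>i\<in>UNIV. x i * f (ebasis i) j))"
    unfolding dpair_def using lin_expand[OF a, of x] by simp
  also have "\<dots> = (\<Sum>j\<in>UNIV. \<Sum>i\<in>UNIV. x i * (z j * f (ebasis i) j))"
    by (simp add: sum_distrib_left mult_ac)
  also have "\<dots> = (\<Sum>i\<in>UNIV. \<Sum>j\<in>UNIV. x i * (z j * f (ebasis i) j))"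
    by (rule sum.swap)
  also have "\<dots> = (\<Sum>i\<in>UNIV. x i * dpair z (f (ebasis i)))"
    by (simp add: dpair_def sum_distrib_left)
  finally show ?thesis .
qed

lemma bil_lin: "bilinear_op m \<Longrightarrow> lin_map (\<lambda>x. m x y)" "bilinear_op m \<Longrightarrow> lin_map (m x)"
  unfolding bilinear_op_def by auto

lemma dpair_bil: fixes m :: "('n::finite \<Rightarrow> 'k::field) \<Rightarrow> ('n \<Rightarrow> 'k) \<Rightarrow> ('n \<Rightarrow> 'k)" shows "bilinear_op m \<Longrightarrow> dpair z (m x y) = (\<Sum>i\<in>UNIV. \<Sum>j\<in>UNIV. x i * y j * dpair z (m (ebasis i) (ebasis j)))"
  apply (subst dpair_lin[OF bil_lin(1)], assumption)
  apply (subst dpair_lin[OF bil_lin(2)], assumption)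
  apply (simp add: sum_distrib_left mult_ac)
  done

lemma dpair_Tmap: "dpair t (Tmap r z) = dpair z (Tmap (flip r) t)"
proof -
  have "dpair t (Tmap r z) = (\<Sum>j\<in>UNIV. \<Sum>i\<in>UNIV. t j * r i j * z i)"
    unfolding dpair_def Tmap_def by (simp add: sum_distrib_left mult_ac)
  also have "\<dots> = (\<Sum>i\<in>UNIV. \<Sum>j\<in>UNIV. t j * r i j * z i)" by (rule sum.swap)
  also have "\<dots> = dpair z (Tmap (flip r) t)"
    unfolding dpair_def Tmap_def flip_def by (simp add: sum_distrib_left mult_ac)
  finally show ?thesis .
qed

lemma Tmap_add: "Tmap r (x + y) = Tmap r x + Tmap r y"
  by (simp add: Tmap_def fun_eq_iff algebra_simps sum.distrib)
lemma Tmap_smul: "Tmap r (\<lambda>i. c * x i) = (\<lambda>i. c * Tmap r x i)"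
  by (simp add: Tmap_def fun_eq_iff sum_distrib_left mult_ac)
lemma Tmap_tsum2: "Tmap (tsum2 s t) x = Tmap s x + Tmap t x"
  by (simp add: Tmap_def tsum2_def fun_eq_iff algebra_simps sum.distrib)
lemma flip_sym: "flip (tsum2 s (flip s)) = tsum2 s (flip s)"
  by (simp add: flip_def tsum2_def fun_eq_iff add.commute)

lemma dual_rep_pair: fixes f :: "('n::finite \<Rightarrow> 'k::field) \<Rightarrow> ('n \<Rightarrow> 'k) \<Rightarrow> ('n \<Rightarrow> 'k)" shows "lin_map (f a) \<Longrightarrow> dpair (dual_rep f a z) x = - dpair z (f a x)"
proof -
  assume a: "lin_map (f a)"
  show ?thesis
    unfolding dpair_lin[OF a, of z x]
    by (simp add: dual_rep_def dpair_def sum_negf mult_ac)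
qed

lemma lin_plus: "lin_map f \<Longrightarrow> lin_map g \<Longrightarrow> lin_map (\<lambda>y. vadd (f y) (g y))"
  unfolding lin_map_def vadd_def smul_def by (simp add: algebra_simps)
lemma lin_id: "lin_map id" unfolding lin_map_def by simp

definition contr :: "('n::finite \<Rightarrow> 'k::field) \<Rightarrow> ('n \<Rightarrow> 'k) \<Rightarrow> ('n \<Rightarrow> 'k) \<Rightarrow> ('n \<Rightarrow> 'n \<Rightarrow> 'n \<Rightarrow> 'k) \<Rightarrow> 'k" where
  "contr a b c X = (\<Sum>u\<in>UNIV. \<Sum>v\<in>UNIV. \<Sum>w\<in>UNIV. a u * b v * c w * X u v w)"

lemma contr_add: "contr a b c (\<lambda>u v w. X u v w + Y u v w) = contr a b c X + contr a b c Y"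
  by (simp add: contr_def algebra_simps sum.distrib)
lemma contr_smul: "contr a b c (\<lambda>u v w. k * X u v w) = k * contr a b c X"
  by (simp add: contr_def sum_distrib_left mult_ac)
lemma contr_zero: "contr a b c (\<lambda>u v w. 0) = 0"
  by (simp add: contr_def)
lemma contr_sum: "contr a b c (\<lambda>u v w. \<Sum>p\<in>UNIV. X p u v w) = (\<Sum>p\<in>UNIV. contr a b c (X p))"
proof -
  have "contr a b c (\<lambda>u v w. \<Sum>p\<in>UNIV. X p u v w) = (\<Sum>u\<in>UNIV. \<Sum>v\<in>UNIV. \<Sum>w\<in>UNIV. \<Sum>p\<in>UNIV. a u * b v * c w * X p u v w)"
    by (simp add: contr_def sum_distrib_left)
  also have "\<dots> = (\<Sum>u\<in>UNIV. \<Sum>v\<in>UNIV. \<Sum>p\<in>UNIV. \<Sum>w\<in>UNIV. a u * b v * c w * X p u v w)"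
    by (rule sum.cong[OF refl], rule sum.cong[OF refl], rule sum.swap)
  also have "\<dots> = (\<Sum>u\<in>UNIV. \<Sum>p\<in>UNIV. \<Sum>v\<in>UNIV. \<Sum>w\<in>UNIV. a u * b v * c w * X p u v w)"
    by (rule sum.cong[OF refl], rule sum.swap)
  also have "\<dots> = (\<Sum>p\<in>UNIV. \<Sum>u\<in>UNIV. \<Sum>v\<in>UNIV. \<Sum>w\<in>UNIV. a u * b v * c w * X p u v w)"
    by (rule sum.swap)
  finally show ?thesis by (simp add: contr_def)
qed
lemma prod2: "(\<Sum>q\<in>UNIV. A q) * (\<Sum>q'\<in>UNIV. B q') * (C::'k::field) = (\<Sum>q\<in>UNIV. \<Sum>q'\<in>UNIV. A q * B q' * C)"
  apply (simp only: sum_product)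
  apply (simp only: sum_distrib_right)
  done
lemma contr_tens3: "contr a b c (tens3 x y z) = dpair a x * dpair b y * dpair c z"
proof -
  have "dpair a x * dpair b y * dpair c z = (\<Sum>u\<in>UNIV. \<Sum>v\<in>UNIV. (a u * x u) * (b v * y v) * dpair c z)"
    unfolding dpair_def[of a x] dpair_def[of b y] by (rule prod2)
  also have "\<dots> = (\<Sum>u\<in>UNIV. \<Sum>v\<in>UNIV. \<Sum>w\<in>UNIV. (a u * x u) * (b v * y v) * (c w * z w))"
    by (simp only: dpair_def sum_distrib_left)
  finally show ?thesis by (simp add: contr_def tens3_def mult_ac)
qed

lemma reord1: "(\<Sum>i\<in>UNIV. \<Sum>j\<in>UNIV. (\<Sum>q\<in>UNIV. A i q) * (\<Sum>q'\<in>UNIV. B j q') * (C i j::'k::field))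
  = (\<Sum>i\<in>UNIV. \<Sum>q\<in>UNIV. \<Sum>j\<in>UNIV. \<Sum>q'\<in>UNIV. A i q * B j q' * C i j)"
proof -
  have "(\<Sum>i\<in>UNIV. \<Sum>j\<in>UNIV. (\<Sum>q\<in>UNIV. A i q) * (\<Sum>q'\<in>UNIV. B j q') * C i j)
    = (\<Sum>i\<in>UNIV. \<Sum>j\<in>UNIV. \<Sum>q\<in>UNIV. \<Sum>q'\<in>UNIV. A i q * B j q' * C i j)"
    by (simp only: prod2)
  also have "\<dots> = (\<Sum>i\<in>UNIV. \<Sum>q\<in>UNIV. \<Sum>j\<in>UNIV. \<Sum>q'\<in>UNIV. A i q * B j q' * C i j)"
    by (rule sum.cong[OF refl], rule sum.swap)
  finally show ?thesis .
qed
lemma reord2: "(\<Sum>i\<in>UNIV. \<Sum>j\<in>UNIV. (\<Sum>p\<in>UNIV. A p i) * (\<Sum>p'\<in>UNIV. B p' j) * (C i j::'k::field))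
  = (\<Sum>p\<in>UNIV. \<Sum>i\<in>UNIV. \<Sum>p'\<in>UNIV. \<Sum>j\<in>UNIV. A p i * B p' j * C i j)"
proof -
  have "(\<Sum>i\<in>UNIV. \<Sum>j\<in>UNIV. (\<Sum>p\<in>UNIV. A p i) * (\<Sum>p'\<in>UNIV. B p' j) * C i j)
    = (\<Sum>i\<in>UNIV. \<Sum>j\<in>UNIV. \<Sum>p\<in>UNIV. \<Sum>p'\<in>UNIV. A p i * B p' j * C i j)"
    by (simp only: prod2)
  also have "\<dots> = (\<Sum>i\<in>UNIV. \<Sum>p\<in>UNIV. \<Sum>j\<in>UNIV. \<Sum>p'\<in>UNIV. A p i * B p' j * C i j)"
    by (rule sum.cong[OF refl], rule sum.swap)
  also have "\<dots> = (\<Sum>i\<in>UNIV. \<Sum>p\<in>UNIV. \<Sum>p'\<in>UNIV. \<Sum>j\<in>UNIV. A p i * B p' j * C i j)"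
    by (rule sum.cong[OF refl], rule sum.cong[OF refl], rule sum.swap)
  also have "\<dots> = (\<Sum>p\<in>UNIV. \<Sum>i\<in>UNIV. \<Sum>p'\<in>UNIV. \<Sum>j\<in>UNIV. A p i * B p' j * C i j)"
    by (rule sum.swap)
  finally show ?thesis .
qed
lemma reord3: "(\<Sum>i\<in>UNIV. \<Sum>j\<in>UNIV. (\<Sum>p\<in>UNIV. A p i) * (\<Sum>q'\<in>UNIV. B j q') * (C i j::'k::field))
  = (\<Sum>p\<in>UNIV. \<Sum>i\<in>UNIV. \<Sum>j\<in>UNIV. \<Sum>q'\<in>UNIV. A p i * B j q' * C i j)"
proof -
  have "(\<Sum>i\<in>UNIV. \<Sum>j\<in>UNIV. (\<Sum>p\<in>UNIV. A p i) * (\<Sum>q'\<in>UNIV. B j q') * C i j)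
    = (\<Sum>i\<in>UNIV. \<Sum>j\<in>UNIV. \<Sum>p\<in>UNIV. \<Sum>q'\<in>UNIV. A p i * B j q' * C i j)"
    by (simp only: prod2)
  also have "\<dots> = (\<Sum>i\<in>UNIV. \<Sum>p\<in>UNIV. \<Sum>j\<in>UNIV. \<Sum>q'\<in>UNIV. A p i * B j q' * C i j)"
    by (rule sum.cong[OF refl], rule sum.swap)
  also have "\<dots> = (\<Sum>p\<in>UNIV. \<Sum>i\<in>UNIV. \<Sum>j\<in>UNIV. \<Sum>q'\<in>UNIV. A p i * B j q' * C i j)"
    by (rule sum.swap)
  finally show ?thesis .
qed

lemma bil_circ: "bilinear_op sc \<Longrightarrow> bilinear_op pr \<Longrightarrow> bilinear_op (circ sc pr)"
  unfolding bilinear_op_def circ_def by (auto intro: lin_plus)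
lemma bil_odot: "bilinear_op sc \<Longrightarrow> bilinear_op pr \<Longrightarrow> bilinear_op (odot sc pr)"
  unfolding bilinear_op_def odot_def by (auto intro: lin_plus)

lemma Tmap_flip_apply: "Tmap (flip s) b i = (\<Sum>q\<in>UNIV. s i q * b q)"
  by (simp add: Tmap_def flip_def)
lemma Tmap_apply: "Tmap s b i = (\<Sum>p\<in>UNIV. s p i * b p)"
  by (simp add: Tmap_def)

lemma YBE_pair:
  fixes sc pr :: "('n::finite \<Rightarrow> 'k::field) \<Rightarrow> ('n \<Rightarrow> 'k) \<Rightarrow> ('n \<Rightarrow> 'k)"
  assumes Y: "APN_YBE sc pr s" and bs: "bilinear_op sc" and bp: "bilinear_op pr"
  shows "dpair a (circ sc pr (Tmap (flip s) b) (Tmap (flip s) c)) + dpair c (odot sc pr (Tmap s b) (Tmap s a))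
         + dpair b (pr (Tmap s a) (Tmap (flip s) c)) = 0"
proof -
  let ?e = "ebasis :: 'n \<Rightarrow> 'n \<Rightarrow> 'k"
  have Z: "(\<lambda>u v w. \<Sum>p\<in>UNIV. \<Sum>q\<in>UNIV. \<Sum>p'\<in>UNIV. \<Sum>q'\<in>UNIV. s p q * s p' q' *
        (tens3 (circ sc pr (?e p) (?e p')) (?e q) (?e q') u v w
       + tens3 (?e p') (?e p) (odot sc pr (?e q) (?e q')) u v w
       + tens3 (?e p) (pr (?e q) (?e p')) (?e q') u v w)) = (\<lambda>u v w. 0)"
    using Y unfolding APN_YBE_def by (simp add: fun_eq_iff)
  have "contr a b c (\<lambda>u v w. \<Sum>p\<in>UNIV. \<Sum>q\<in>UNIV. \<Sum>p'\<in>UNIV. \<Sum>q'\<in>UNIV. s p q * s p' q' *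
        (tens3 (circ sc pr (?e p) (?e p')) (?e q) (?e q') u v w
       + tens3 (?e p') (?e p) (odot sc pr (?e q) (?e q')) u v w
       + tens3 (?e p) (pr (?e q) (?e p')) (?e q') u v w)) = 0"
    by (simp only: Z contr_zero)
  then have E: "(\<Sum>p\<in>UNIV. \<Sum>q\<in>UNIV. \<Sum>p'\<in>UNIV. \<Sum>q'\<in>UNIV. s p q * s p' q' *
        (dpair a (circ sc pr (?e p) (?e p')) * b q * c q'
       + a p' * b p * dpair c (odot sc pr (?e q) (?e q'))
       + a p * dpair b (pr (?e q) (?e p')) * c q')) = 0"
    by (simp only: contr_sum contr_smul contr_add contr_tens3 dpair_ebasis)
  have T1: "dpair a (circ sc pr (Tmap (flip s) b) (Tmap (flip s) c)) =
     (\<Sum>p\<in>UNIV. \<Sum>q\<in>UNIV. \<Sum>p'\<in>UNIV. \<Sum>q'\<in>UNIV. s p q * s p' q' * (dpair a (circ sc pr (?e p) (?e p')) * b q * c q'))"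
    unfolding dpair_bil[OF bil_circ[OF bs bp], of a "Tmap (flip s) b"] Tmap_flip_apply reord1 by (simp add: mult_ac)
  have T2: "dpair c (odot sc pr (Tmap s b) (Tmap s a)) =
     (\<Sum>p\<in>UNIV. \<Sum>q\<in>UNIV. \<Sum>p'\<in>UNIV. \<Sum>q'\<in>UNIV. s p q * s p' q' * (a p' * b p * dpair c (odot sc pr (?e q) (?e q'))))"
    unfolding dpair_bil[OF bil_odot[OF bs bp], of c "Tmap s b"] Tmap_apply reord2 by (simp add: mult_ac)
  have T3: "dpair b (pr (Tmap s a) (Tmap (flip s) c)) =
     (\<Sum>p\<in>UNIV. \<Sum>q\<in>UNIV. \<Sum>p'\<in>UNIV. \<Sum>q'\<in>UNIV. s p q * s p' q' * (a p * dpair b (pr (?e q) (?e p')) * c q'))"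
    unfolding dpair_bil[OF bp, of b "Tmap s a"] Tmap_flip_apply Tmap_apply reord3 by (simp add: mult_ac flip_def)
  show ?thesis using E unfolding T1 T2 T3 by (simp only: distrib_left sum.distrib)
qed

lemma tm_contract: "(\<Sum>u\<in>UNIV. \<Sum>v\<in>UNIV. a u * b v * tensor_map f g r u v) =
   (\<Sum>p\<in>UNIV. \<Sum>q\<in>UNIV. r p q * dpair a (f (ebasis p)) * dpair b (g (ebasis q)))"
proof -
  have "(\<Sum>u\<in>UNIV. \<Sum>v\<in>UNIV. a u * b v * tensor_map f g r u v) =
     (\<Sum>u\<in>UNIV. \<Sum>v\<in>UNIV. \<Sum>p\<in>UNIV. \<Sum>q\<in>UNIV. r p q * (a u * f (ebasis p) u) * (b v * g (ebasis q) v))"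
    unfolding tensor_map_def by (simp add: sum_distrib_left mult_ac)
  also have "\<dots> = (\<Sum>u\<in>UNIV. \<Sum>p\<in>UNIV. \<Sum>v\<in>UNIV. \<Sum>q\<in>UNIV. r p q * (a u * f (ebasis p) u) * (b v * g (ebasis q) v))"
    by (rule sum.cong[OF refl], rule sum.swap)
  also have "\<dots> = (\<Sum>p\<in>UNIV. \<Sum>u\<in>UNIV. \<Sum>v\<in>UNIV. \<Sum>q\<in>UNIV. r p q * (a u * f (ebasis p) u) * (b v * g (ebasis q) v))"
    by (rule sum.swap)
  also have "\<dots> = (\<Sum>p\<in>UNIV. \<Sum>u\<in>UNIV. \<Sum>q\<in>UNIV. \<Sum>v\<in>UNIV. r p q * (a u * f (ebasis p) u) * (b v * g (ebasis q) v))"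
    by (rule sum.cong[OF refl], rule sum.cong[OF refl], rule sum.swap)
  also have "\<dots> = (\<Sum>p\<in>UNIV. \<Sum>q\<in>UNIV. \<Sum>u\<in>UNIV. \<Sum>v\<in>UNIV. r p q * (a u * f (ebasis p) u) * (b v * g (ebasis q) v))"
    by (rule sum.cong[OF refl], rule sum.swap)
  also have "\<dots> = (\<Sum>p\<in>UNIV. \<Sum>q\<in>UNIV. r p q * dpair a (f (ebasis p)) * dpair b (g (ebasis q)))"
    unfolding dpair_def by (simp add: sum_distrib_left sum_distrib_right mult_ac)
  finally show ?thesis .
qed

lemma L_left:
  fixes g :: "('n::finite \<Rightarrow> 'k::field) \<Rightarrow> ('n \<Rightarrow> 'k)"
  assumes "lin_map g"
  shows "(\<Sum>p\<in>UNIV. \<Sum>q\<in>UNIV. r p q * dpair a (id (ebasis p)) * dpair b (g (ebasis q))) = dpair b (g (Tmap r a))"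
proof -
  have "(\<Sum>p\<in>UNIV. \<Sum>q\<in>UNIV. r p q * dpair a (id (ebasis p)) * dpair b (g (ebasis q)))
     = (\<Sum>q\<in>UNIV. \<Sum>p\<in>UNIV. r p q * a p * dpair b (g (ebasis q)))"
    unfolding id_def dpair_ebasis by (rule sum.swap)
  also have "\<dots> = (\<Sum>q\<in>UNIV. Tmap r a q * dpair b (g (ebasis q)))"
    by (simp add: Tmap_def sum_distrib_left sum_distrib_right mult_ac)
  also have "\<dots> = dpair b (g (Tmap r a))" by (rule dpair_lin[OF assms, symmetric])
  finally show ?thesis .
qed

lemma L_right:
  fixes f :: "('n::finite \<Rightarrow> 'k::field) \<Rightarrow> ('n \<Rightarrow> 'k)"
  assumes "lin_map f"
  shows "(\<Sum>p\<in>UNIV. \<Sum>q\<in>UNIV. r p q * dpair a (f (ebasis p)) * dpair b (id (ebasis q))) = dpair a (f (Tmap (flip r) b))"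
proof -
  have "(\<Sum>p\<in>UNIV. \<Sum>q\<in>UNIV. r p q * dpair a (f (ebasis p)) * dpair b (id (ebasis q)))
     = (\<Sum>p\<in>UNIV. Tmap (flip r) b p * dpair a (f (ebasis p)))"
    by (simp add: dpair_ebasis Tmap_def flip_def sum_distrib_left sum_distrib_right mult_ac)
  also have "\<dots> = dpair a (f (Tmap (flip r) b))" by (rule dpair_lin[OF assms, symmetric])
  finally show ?thesis .
qed

lemma lin_Lstar: "bilinear_op sc \<Longrightarrow> bilinear_op pr \<Longrightarrow> lin_map (Lstar sc pr x)"
  unfolding Lstar_def by (intro lin_plus bil_lin bil_circ)
lemma lin_Lodot: "bilinear_op sc \<Longrightarrow> bilinear_op pr \<Longrightarrow> lin_map (Lodot sc pr x)"
  unfolding Lodot_def using bil_lin(2)[OF bil_odot] by blast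

lemma inv_I:
  fixes sc pr :: "('n::finite \<Rightarrow> 'k::field) \<Rightarrow> ('n \<Rightarrow> 'k) \<Rightarrow> ('n \<Rightarrow> 'k)"
  assumes I: "invariant sc pr r" and sym: "flip r = r" and bs: "bilinear_op sc" and bp: "bilinear_op pr"
  shows "dpair b (Lstar sc pr x (Tmap r a)) = dpair a (sc x (Tmap r b))"
    and "dpair a (circ sc pr x (Tmap r b)) = dpair b (Lodot sc pr x (Tmap r a))"
proof -
  have e1: "tensor_map id (Lstar sc pr x) r = tensor_map (sc x) id r"
   and e2: "tensor_map (circ sc pr x) id r = tensor_map id (Lodot sc pr x) r"
    using I unfolding invariant_def by auto
  have "dpair b (Lstar sc pr x (Tmap r a)) = (\<Sum>u\<in>UNIV. \<Sum>v\<in>UNIV. a u * b v * tensor_map id (Lstar sc pr x) r u v)"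
    unfolding tm_contract L_left[OF lin_Lstar[OF bs bp]] ..
  also have "\<dots> = dpair a (sc x (Tmap r b))"
    unfolding e1 tm_contract L_right[OF bil_lin(2)[OF bs]] sym ..
  finally show "dpair b (Lstar sc pr x (Tmap r a)) = dpair a (sc x (Tmap r b))" .
  have "dpair a (circ sc pr x (Tmap r b)) = (\<Sum>u\<in>UNIV. \<Sum>v\<in>UNIV. a u * b v * tensor_map (circ sc pr x) id r u v)"
    unfolding tm_contract L_right[OF bil_lin(2)[OF bil_circ[OF bs bp]]] sym ..
  also have "\<dots> = dpair b (Lodot sc pr x (Tmap r a))"
    unfolding e2 tm_contract L_left[OF lin_Lodot[OF bs bp]] ..
  finally show "dpair a (circ sc pr x (Tmap r b)) = dpair b (Lodot sc pr x (Tmap r a))" .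
qed

lemma bil_add: "bilinear_op m \<Longrightarrow> m (x + y) z = m x z + m y z" "bilinear_op m \<Longrightarrow> m z (x + y) = m z x + m z y"
  by (auto dest: bil_lin intro: lin_add)
lemma bil_diff: "bilinear_op m \<Longrightarrow> m (x - y) z = m x z - m y z" "bilinear_op m \<Longrightarrow> m z (x - y) = m z x - m z y"
  by (auto dest: bil_lin intro: lin_diff)
lemma bil_neg: "bilinear_op m \<Longrightarrow> m (- x) z = - m x z" "bilinear_op m \<Longrightarrow> m z (- x) = - m z x"
  by (auto dest: bil_lin intro: lin_neg)

lemma J_lemmas:
  fixes sc pr :: "('n::finite \<Rightarrow> 'k::field) \<Rightarrow> ('n \<Rightarrow> 'k) \<Rightarrow> ('n \<Rightarrow> 'k)"
  assumes I: "invariant sc pr r" and sym: "flip r = r" and bs: "bilinear_op sc" and bp: "bilinear_op pr"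
    and su: "surj (Tmap r)"
  shows J1: "dpair g (sc (Tmap r a) w) = dpair a (sc (Tmap r g) w)"
    and J2: "dpair g (pr (Tmap r a) y) = - dpair a (circ sc pr (Tmap r g) y)"
    and J3: "dpair z (sc (Tmap r t) y) + dpair z (pr y (Tmap r t)) + dpair t (pr y (Tmap r z)) = 0"
proof -
  note I1 = inv_I(1)[OF I sym bs bp] and I2 = inv_I(2)[OF I sym bs bp]
  note simps = Lstar_def Lodot_def circ_def odot_def vops dpair_add2 dpair_diff2 dpair_neg2
  show J2g: "\<And>g a y. dpair g (pr (Tmap r a) y) = - dpair a (circ sc pr (Tmap r g) y)"
  proof -
    fix g a y
    have h1: "dpair a (circ sc pr y (Tmap r g)) = dpair g (Lodot sc pr y (Tmap r a))" by (rule I2)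
    have h2: "dpair a (Lstar sc pr y (Tmap r g)) = dpair g (sc y (Tmap r a))" by (rule I1)
    show "dpair g (pr (Tmap r a) y) = - dpair a (circ sc pr (Tmap r g) y)"
      using h1 h2 by (simp add: simps; algebra)
  qed
  obtain w' where w': "w = Tmap r w'" using su by (metis surjD)
  have h1: "dpair w' (Lstar sc pr (Tmap r a) (Tmap r g)) = dpair g (sc (Tmap r a) (Tmap r w'))" by (rule I1)
  have h2: "dpair w' (Lstar sc pr (Tmap r g) (Tmap r a)) = dpair a (sc (Tmap r g) (Tmap r w'))" by (rule I1)
  show "dpair g (sc (Tmap r a) w) = dpair a (sc (Tmap r g) w)"
    using h1 h2 unfolding w' by (simp add: simps algebra_simps)
  obtain y' where y': "y = Tmap r y'" using su by (metis surjD)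
  have k1: "dpair y' (Lstar sc pr (Tmap r t) (Tmap r z)) = dpair z (sc (Tmap r t) (Tmap r y'))" by (rule I1)
  have k2: "dpair z (pr (Tmap r y') (Tmap r t)) = - dpair y' (circ sc pr (Tmap r z) (Tmap r t))" by (rule J2g)
  have k3: "dpair t (pr (Tmap r y') (Tmap r z)) = - dpair y' (circ sc pr (Tmap r t) (Tmap r z))" by (rule J2g)
  show "dpair z (sc (Tmap r t) y) + dpair z (pr y (Tmap r t)) + dpair t (pr y (Tmap r z)) = 0"
  proof -
    have k1': "dpair y' (circ sc pr (Tmap r t) (Tmap r z)) + dpair y' (circ sc pr (Tmap r z) (Tmap r t)) = dpair z (sc (Tmap r t) (Tmap r y'))"
      using k1 by (simp only: Lstar_def vops dpair_add2)
    show ?thesis unfolding y' k2 k3 k1'[symmetric] by (simp add: algebra_simps)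
  qed
qed

lemma ds_pair:
  fixes sc pr :: "('n::finite \<Rightarrow> 'k::field) \<Rightarrow> ('n \<Rightarrow> 'k) \<Rightarrow> ('n \<Rightarrow> 'k)"
  assumes bs: "bilinear_op sc" and bp: "bilinear_op pr"
  shows "dpair (dual_succ sc pr s a b) x = - dpair a (sc x (Tmap (flip s) b)) + dpair b (Lstar sc pr (Tmap s a) x)"
proof -
  have l1: "lin_map (Rop sc (Tmap (flip s) b))" unfolding Rop_def by (rule bil_lin(1)[OF bs])
  have l2: "lin_map (Lstar sc pr (Tmap s a))" by (rule lin_Lstar[OF bs bp])
  show ?thesis unfolding dual_succ_def vops dpair_diff1 dual_rep_pair[of "Rop sc" "Tmap (flip s) b", OF l1] dual_rep_pair[of "Lstar sc pr" "Tmap s a", OF l2]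
    by (simp add: Rop_def)
qed

lemma dp_pair:
  fixes sc pr :: "('n::finite \<Rightarrow> 'k::field) \<Rightarrow> ('n \<Rightarrow> 'k) \<Rightarrow> ('n \<Rightarrow> 'k)"
  assumes bs: "bilinear_op sc" and bp: "bilinear_op pr"
  shows "dpair (dual_prec sc pr s a b) x = - dpair b (odot sc pr x (Tmap s a)) + dpair a (circ sc pr x (Tmap (flip s) b))"
proof -
  have l1: "lin_map (Rodot sc pr (Tmap s a))" unfolding Rodot_def by (rule bil_lin(1)[OF bil_odot[OF bs bp]])
  have l2: "lin_map (Rcirc sc pr (Tmap (flip s) b))" unfolding Rcirc_def by (rule bil_lin(1)[OF bil_circ[OF bs bp]])
  show ?thesis unfolding dual_prec_def vops dpair_diff1 dual_rep_pair[of "Rodot sc pr" "Tmap s a", OF l1] dual_rep_pair[of "Rcirc sc pr" "Tmap (flip s) b", OF l2]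
    by (simp add: Rodot_def Rcirc_def)
qed

lemma flip_flip: "flip (flip s) = s" by (simp add: flip_def)

lemma homs:
  fixes sc pr :: "('n::finite \<Rightarrow> 'k::field) \<Rightarrow> ('n \<Rightarrow> 'k) \<Rightarrow> ('n \<Rightarrow> 'k)"
  assumes APN: "anti_pre_Novikov sc pr" and F: "factorizable sc pr s"
  shows "Tmap s (dual_succ sc pr s a b) = sc (Tmap s a) (Tmap s b)"
    and "Tmap s (dual_prec sc pr s a b) = pr (Tmap s a) (Tmap s b)"
    and "Tmap (flip s) (dual_succ sc pr s a b) = - sc (Tmap (flip s) a) (Tmap (flip s) b)"
    and "Tmap (flip s) (dual_prec sc pr s a b) = - pr (Tmap (flip s) a) (Tmap (flip s) b)"
proof -
  let ?r = "tsum2 s (flip s)"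
  have bs: "bilinear_op sc" and bp: "bilinear_op pr" using APN unfolding anti_pre_Novikov_def by auto
  have Y: "APN_YBE sc pr s" and I: "invariant sc pr ?r" and B: "bij (Tmap ?r)"
    using F unfolding factorizable_def by auto
  have su: "surj (Tmap ?r)" using B bij_is_surj by blast
  note sym = flip_sym[of s]
  note YB = YBE_pair[OF Y bs bp]
  note I1 = inv_I(1)[OF I sym bs bp]
  note J1 = J1[OF I sym bs bp su]
  note J2 = J2[OF I sym bs bp su]
  note J3 = J3[OF I sym bs bp su]
  note ex = Tmap_tsum2 bil_add[OF bs] bil_add[OF bp] bil_neg[OF bs] bil_neg[OF bp] Lstar_def circ_def odot_def vops
     dpair_add2 dpair_diff2 dpair_neg2
  have eds: "\<And>a b t. dpair t (Tmap s (dual_succ sc pr s a b)) = - dpair a (sc (Tmap (flip s) t) (Tmap (flip s) b)) + dpair b (Lstar sc pr (Tmap s a) (Tmap (flip s) t))"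
    unfolding dpair_Tmap[of _ s] ds_pair[OF bs bp] ..
  have edp: "\<And>a b t. dpair t (Tmap s (dual_prec sc pr s a b)) = - dpair b (odot sc pr (Tmap (flip s) t) (Tmap s a)) + dpair a (circ sc pr (Tmap (flip s) t) (Tmap (flip s) b))"
    unfolding dpair_Tmap[of _ s] dp_pair[OF bs bp] ..
  have eds2: "\<And>a b t. dpair t (Tmap (flip s) (dual_succ sc pr s a b)) = - dpair a (sc (Tmap s t) (Tmap (flip s) b)) + dpair b (Lstar sc pr (Tmap s a) (Tmap s t))"
    unfolding dpair_Tmap[of _ "flip s"] flip_flip ds_pair[OF bs bp] ..
  have edp2: "\<And>a b t. dpair t (Tmap (flip s) (dual_prec sc pr s a b)) = - dpair b (odot sc pr (Tmap s t) (Tmap s a)) + dpair a (circ sc pr (Tmap s t) (Tmap (flip s) b))"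
    unfolding dpair_Tmap[of _ "flip s"] flip_flip dp_pair[OF bs bp] ..
  have G1: "\<And>a b. Tmap s (dual_succ sc pr s a b) = sc (Tmap s a) (Tmap s b)"
  proof (rule vec_ext)
    fix a b t
    have f1: "dpair b (Lstar sc pr (Tmap (flip s) t) (Tmap ?r a)) = dpair a (sc (Tmap (flip s) t) (Tmap ?r b))" by (rule I1)
    have f2: "dpair b (circ sc pr (Tmap (flip s) t) (Tmap (flip s) a)) + dpair a (odot sc pr (Tmap s t) (Tmap s b))
         + dpair t (pr (Tmap s b) (Tmap (flip s) a)) = 0" by (rule YB)
    have f3: "dpair b (circ sc pr (Tmap (flip s) a) (Tmap (flip s) t)) + dpair t (odot sc pr (Tmap s a) (Tmap s b))
         + dpair a (pr (Tmap s b) (Tmap (flip s) t)) = 0" by (rule YB)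
    have f4: "dpair a (sc (Tmap ?r t) (Tmap s b)) + dpair a (pr (Tmap s b) (Tmap ?r t)) + dpair t (pr (Tmap s b) (Tmap ?r a)) = 0"
      by (rule J3)
    show "dpair t (Tmap s (dual_succ sc pr s a b)) = dpair t (sc (Tmap s a) (Tmap s b))"
      using f1 f2 f3 f4 unfolding eds apply (simp only: ex) apply algebra done
  qed
  have G2: "\<And>a b. Tmap s (dual_prec sc pr s a b) = pr (Tmap s a) (Tmap s b)"
  proof (rule vec_ext)
    fix a b t
    have f1: "dpair a (circ sc pr (Tmap (flip s) b) (Tmap (flip s) t)) + dpair t (odot sc pr (Tmap s b) (Tmap s a))
         + dpair b (pr (Tmap s a) (Tmap (flip s) t)) = 0" by (rule YB)
    have f2: "dpair t (sc (Tmap s b) (Tmap s a)) = - dpair b (sc (Tmap (flip s) t) (Tmap (flip s) a)) + dpair a (Lstar sc pr (Tmap s b) (Tmap (flip s) t))"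
      unfolding G1[symmetric] eds ..
    have f3: "dpair a (Lstar sc pr (Tmap (flip s) t) (Tmap ?r b)) = dpair b (sc (Tmap (flip s) t) (Tmap ?r a))" by (rule I1)
    show "dpair t (Tmap s (dual_prec sc pr s a b)) = dpair t (pr (Tmap s a) (Tmap s b))"
      using f1 f2 f3 unfolding edp apply (simp only: ex) apply algebra done
  qed
  have G3: "\<And>a b. Tmap (flip s) (dual_succ sc pr s a b) = - sc (Tmap (flip s) a) (Tmap (flip s) b)"
  proof (rule vec_ext)
    fix a b t
    have f1: "dpair t (sc (Tmap s a) (Tmap s b)) = - dpair a (sc (Tmap (flip s) t) (Tmap (flip s) b)) + dpair b (Lstar sc pr (Tmap s a) (Tmap (flip s) t))"
      unfolding G1[symmetric] eds ..
    have f2: "dpair b (Lstar sc pr (Tmap s a) (Tmap ?r t)) = dpair t (sc (Tmap s a) (Tmap ?r b))" by (rule I1)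
    have f3: "dpair a (sc (Tmap ?r t) (Tmap (flip s) b)) = dpair t (sc (Tmap ?r a) (Tmap (flip s) b))" by (rule J1)
    show "dpair t (Tmap (flip s) (dual_succ sc pr s a b)) = dpair t (- sc (Tmap (flip s) a) (Tmap (flip s) b))"
      using f1 f2 f3 unfolding eds2 apply (simp only: ex) apply algebra done
  qed
  have G4: "\<And>a b. Tmap (flip s) (dual_prec sc pr s a b) = - pr (Tmap (flip s) a) (Tmap (flip s) b)"
  proof (rule vec_ext)
    fix a b t
    have f1: "dpair t (pr (Tmap s a) (Tmap s b)) = - dpair b (odot sc pr (Tmap (flip s) t) (Tmap s a)) + dpair a (circ sc pr (Tmap (flip s) t) (Tmap (flip s) b))"
      unfolding G2[symmetric] edp ..
    have f2: "dpair t (pr (Tmap ?r a) (Tmap (flip s) b)) = - dpair a (circ sc pr (Tmap ?r t) (Tmap (flip s) b))" by (rule J2)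
    have f3: "dpair b (sc (Tmap ?r t) (Tmap s a)) + dpair b (pr (Tmap s a) (Tmap ?r t)) + dpair t (pr (Tmap s a) (Tmap ?r b)) = 0"
      by (rule J3)
    show "dpair t (Tmap (flip s) (dual_prec sc pr s a b)) = dpair t (- pr (Tmap (flip s) a) (Tmap (flip s) b))"
      using f1 f2 f3 unfolding edp2 apply (simp only: ex) apply algebra done
  qed
  show "Tmap s (dual_succ sc pr s a b) = sc (Tmap s a) (Tmap s b)" by (rule G1)
  show "Tmap s (dual_prec sc pr s a b) = pr (Tmap s a) (Tmap s b)" by (rule G2)
  show "Tmap (flip s) (dual_succ sc pr s a b) = - sc (Tmap (flip s) a) (Tmap (flip s) b)" by (rule G3)
  show "Tmap (flip s) (dual_prec sc pr s a b) = - pr (Tmap (flip s) a) (Tmap (flip s) b)" by (rule G4)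
qed

lemma Tmap_zero: "Tmap r 0 = 0" by (simp add: Tmap_def fun_eq_iff)

theorem mainTheorem18:
  fixes sc pr :: "('n::finite \<Rightarrow> 'k::field) \<Rightarrow> ('n \<Rightarrow> 'k) \<Rightarrow> ('n \<Rightarrow> 'k)"
    and s :: "'n \<Rightarrow> 'n \<Rightarrow> 'k"
  assumes "anti_pre_Novikov sc pr"
    and "factorizable sc pr s"
  shows "APN_subalgebra_dsum sc pr (range (\<lambda>zeta. (Tmap s zeta, vneg (Tmap (flip s) zeta))))
    \<and> APN_iso_dual_onto sc pr s (range (\<lambda>zeta. (Tmap s zeta, vneg (Tmap (flip s) zeta))))
    \<and> (\<forall>x. \<exists>!p. p \<in> range (\<lambda>zeta. (Tmap s zeta, vneg (Tmap (flip s) zeta))) \<and> x = vsub (fst p) (snd p))"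
proof -
  define phi where "phi = (\<lambda>zeta. (Tmap s zeta, vneg (Tmap (flip s) zeta)))"
  let ?r = "tsum2 s (flip s)"
  have bs: "bilinear_op sc" and bp: "bilinear_op pr" using assms(1) unfolding anti_pre_Novikov_def by auto
  have B: "bij (Tmap ?r)" using assms(2) unfolding factorizable_def by auto
  have injR: "inj (Tmap ?r)" and surR: "surj (Tmap ?r)" using B bij_is_inj bij_is_surj by auto
  have Rsplit: "\<And>z. Tmap ?r z = vsub (fst (phi z)) (snd (phi z))"
    by (simp add: phi_def Tmap_tsum2 vops)
  have phi_add: "\<And>x y. phi (vadd x y) = padd (phi x) (phi y)"
    by (simp add: phi_def padd_def vops Tmap_add)
  have phi_smul: "\<And>c x. phi (smul c x) = psmul c (phi x)"
    by (simp add: phi_def psmul_def smul_def vops Tmap_smul fun_eq_iff)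
  have phi_succ: "\<And>a b. phi (dual_succ sc pr s a b) = dsum_op sc (phi a) (phi b)"
    by (simp add: phi_def dsum_op_def vops homs[OF assms] bil_neg[OF bs])
  have phi_prec: "\<And>a b. phi (dual_prec sc pr s a b) = dsum_op pr (phi a) (phi b)"
    by (simp add: phi_def dsum_op_def vops homs[OF assms] bil_neg[OF bp])
  have phi_inj: "inj phi"
  proof (rule injI)
    fix x y assume "phi x = phi y"
    then have "Tmap ?r x = Tmap ?r y" by (simp add: Rsplit)
    then show "x = y" using injR by (simp add: inj_eq)
  qed
  have P1: "APN_subalgebra_dsum sc pr (range phi)"
    unfolding APN_subalgebra_dsum_def
  proof (intro conjI ballI allI)
    have "phi 0 = (vzero, vzero)" by (simp add: phi_def Tmap_zero vops)
    then show "(vzero, vzero) \<in> range phi" by (metis rangeI)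
  next
    fix p q assume "p \<in> range phi" "q \<in> range phi"
    then obtain a b where ab: "p = phi a" "q = phi b" by auto
    show "padd p q \<in> range phi" unfolding ab phi_add[symmetric] by (rule rangeI)
    show "dsum_op sc p q \<in> range phi" unfolding ab phi_succ[symmetric] by (rule rangeI)
    show "dsum_op pr p q \<in> range phi" unfolding ab phi_prec[symmetric] by (rule rangeI)
  next
    fix c p assume "p \<in> range phi"
    then obtain a where a: "p = phi a" by auto
    show "psmul c p \<in> range phi" unfolding a phi_smul[symmetric] by (rule rangeI)
  qed
  have P2: "APN_iso_dual_onto sc pr s (range phi)"
    unfolding APN_iso_dual_onto_def
    using phi_add phi_smul phi_succ phi_prec inj_on_imp_bij_betw[OF phi_inj] by blast
  have P3: "\<forall>x. \<exists>!p. p \<in> range phi \<and> x = vsub (fst p) (snd p)"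
  proof
    fix x
    obtain z where z: "x = Tmap ?r z" using surR by (metis surjD)
    show "\<exists>!p. p \<in> range phi \<and> x = vsub (fst p) (snd p)"
    proof (rule ex1I[of _ "phi z"])
      show "phi z \<in> range phi \<and> x = vsub (fst (phi z)) (snd (phi z))" using z Rsplit by auto
    next
      fix p assume p: "p \<in> range phi \<and> x = vsub (fst p) (snd p)"
      then obtain w where w: "p = phi w" by auto
      have "Tmap ?r w = Tmap ?r z" using p z Rsplit w by auto
      then have "w = z" using injR by (simp add: inj_eq)
      then show "p = phi z" using w by simp
    qed
  qed
  show ?thesis using P1 P2 P3 unfolding phi_def by blast
qed

end
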